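(* Let $\gamma_1,\gamma_2:[a,b]\to\mathrm{Sp}(H)$ be two positive paths. Then the pointwise product $\gamma(t):=\gamma_1(t)\gamma_2(t)$, $t\in[a,b]$, is a positive path.
   Context: $(H,\langle\cdot,\cdot\rangle)$ is a complex Hilbert space and $J\in\mathcal B(H)$ is a bounded injective operator with $J^*=-J$; $\omega(x,y):=\langle Jx,y\rangle$. $\mathrm{Sp}(H):=\{M\in\mathrm{GL}(H): M^*JM=J\}$ (bounded invertible $M$). A $C^1$ path $\gamma$ in $\mathrm{Sp}(H)$ defined on an interval is called positive if $\dot\gamma(t)\gamma(t)^{-1}\in K$ for every $t$, where $K:=\{A\in\mathcal B(H): -JA=A^*J \text{ and } -JA \text{ is positive definite}\}$. *)

theory Defs
  imports "HOL-Analysis.Analysis"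
begin

class complex_inner = real_normed_vector +
  fixes cscale :: "complex \<Rightarrow> 'a \<Rightarrow> 'a"
    and cinner :: "'a \<Rightarrow> 'a \<Rightarrow> complex"
  assumes cscale_add_right: "cscale c (x + y) = cscale c x + cscale c y"
    and cscale_add_left: "cscale (c + d) x = cscale c x + cscale d x"
    and cscale_cscale: "cscale c (cscale d x) = cscale (c * d) x"
    and cscale_one: "cscale 1 x = x"
    and scaleR_cscale: "scaleR r x = cscale (complex_of_real r) x"
    and cinner_add_left: "cinner (x + y) z = cinner x z + cinner y z"
    and cinner_cscale_left: "cinner (cscale c x) y = c * cinner x y"
    and cinner_commute: "cinner y x = cnj (cinner x y)"
    and cinner_nonneg: "0 \<le> Re (cinner x x)"
    and cinner_eq_zero_iff: "cinner x x = 0 \<longleftrightarrow> x = 0"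
    and norm_eq_sqrt_cinner: "norm x = sqrt (Re (cinner x x))"

class chilbert = complex_inner + complete_space

text \<open>\<open>\<B>(H)\<close>: bounded complex-linear operators, represented as bounded (real-)linear
  functions (type \<open>'a \<Rightarrow>\<^sub>L 'a\<close>, carrying the operator norm) that commute with
  complex scalar multiplication.\<close>
definition bop :: "('a::chilbert \<Rightarrow>\<^sub>L 'a) set" where
  "bop = {A. \<forall>c x. blinfun_apply A (cscale c x) = cscale c (blinfun_apply A x)}"

definition is_adjoint :: "('a::chilbert \<Rightarrow>\<^sub>L 'a) \<Rightarrow> ('a \<Rightarrow>\<^sub>L 'a) \<Rightarrow> bool" where
  "is_adjoint B A \<longleftrightarrow> B \<in> bop \<and> (\<forall>x y. cinner (A x) y = cinner x (B y))"

definition GL_op :: "('a::chilbert \<Rightarrow>\<^sub>L 'a) set" where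
  "GL_op = {M \<in> bop. \<exists>N\<in>bop. M o\<^sub>L N = id_blinfun \<and> N o\<^sub>L M = id_blinfun}"

definition inv_op :: "('a::chilbert \<Rightarrow>\<^sub>L 'a) \<Rightarrow> ('a \<Rightarrow>\<^sub>L 'a)" where
  "inv_op M = (THE N. M o\<^sub>L N = id_blinfun \<and> N o\<^sub>L M = id_blinfun)"

definition sympl_op :: "('a::chilbert \<Rightarrow>\<^sub>L 'a) \<Rightarrow> bool" where
  "sympl_op J \<longleftrightarrow> J \<in> bop \<and> inj (blinfun_apply J) \<and> is_adjoint (- J) J"

definition Sp :: "('a::chilbert \<Rightarrow>\<^sub>L 'a) \<Rightarrow> ('a \<Rightarrow>\<^sub>L 'a) set" where
  "Sp J = {M \<in> GL_op. \<exists>Ms. is_adjoint Ms M \<and> Ms o\<^sub>L J o\<^sub>L M = J}"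

definition pos_def :: "('a::chilbert \<Rightarrow>\<^sub>L 'a) \<Rightarrow> bool" where
  "pos_def P \<longleftrightarrow> (\<forall>x. x \<noteq> 0 \<longrightarrow> Im (cinner (P x) x) = 0 \<and> Re (cinner (P x) x) > 0)"

definition Kcone :: "('a::chilbert \<Rightarrow>\<^sub>L 'a) \<Rightarrow> ('a \<Rightarrow>\<^sub>L 'a) set" where
  "Kcone J = {A \<in> bop. (\<exists>As. is_adjoint As A \<and> - (J o\<^sub>L A) = As o\<^sub>L J) \<and> pos_def (- (J o\<^sub>L A))}"

text \<open>\<open>C\<^sup>1\<close> path on an interval \<open>S\<close> in operator norm (one-sided derivatives at endpoints).\<close>
definition C1_on :: "real set \<Rightarrow> (real \<Rightarrow> ('a::chilbert \<Rightarrow>\<^sub>L 'a)) \<Rightarrow> bool" where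
  "C1_on S g \<longleftrightarrow> (\<forall>t\<in>S. g differentiable (at t within S))
      \<and> continuous_on S (\<lambda>t. vector_derivative g (at t within S))"

definition positive_path ::
  "('a::chilbert \<Rightarrow>\<^sub>L 'a) \<Rightarrow> real \<Rightarrow> real \<Rightarrow> (real \<Rightarrow> ('a \<Rightarrow>\<^sub>L 'a)) \<Rightarrow> bool" where
  "positive_path J a b g \<longleftrightarrow>
     (\<forall>t\<in>{a..b}. g t \<in> Sp J) \<and> C1_on {a..b} g \<and>
     (\<forall>t\<in>{a..b}. vector_derivative g (at t within {a..b}) o\<^sub>L inv_op (g t) \<in> Kcone J)"

end

theory Submission
  imports Defs
begin

lemma cinner_zero_left[simp]: "cinner 0 (y::'a::complex_inner) = 0"
  using cinner_add_left[of 0 0 y] by simp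
lemma cinner_minus_left[simp]: "cinner (- x) (y::'a::complex_inner) = - cinner x y"
  proof -
  have "cinner x y + cinner (-x) y = 0" using cinner_add_left[of x "-x" y] by simp
  then show ?thesis by (rule add_eq_0_iff[THEN iffD1])
qed
lemma cinner_diff_left: "cinner (x - y) (z::'a::complex_inner) = cinner x z - cinner y z"
  using cinner_add_left[of x "-y" z] by simp
lemma cinner_add_right: "cinner (x::'a::complex_inner) (y + z) = cinner x y + cinner x z"
  by (metis cinner_commute cinner_add_left complex_cnj_add)
lemma cinner_zero_right[simp]: "cinner (x::'a::complex_inner) 0 = 0"
  by (metis cinner_commute cinner_zero_left complex_cnj_zero)
lemma cinner_minus_right[simp]: "cinner (x::'a::complex_inner) (- y) = - cinner x y"
  by (metis cinner_commute cinner_minus_left complex_cnj_minus)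
lemma cinner_diff_right: "cinner (x::'a::complex_inner) (y - z) = cinner x y - cinner x z"
  using cinner_add_right[of x y "-z"] by simp
lemma cinner_scaleR_left: "cinner (r *\<^sub>R x) (y::'a::complex_inner) = complex_of_real r * cinner x y"
  by (simp add: scaleR_cscale cinner_cscale_left)
lemma cinner_scaleR_right: "cinner (x::'a::complex_inner) (r *\<^sub>R y) = complex_of_real r * cinner x y"
  by (metis cinner_commute cinner_scaleR_left complex_cnj_mult complex_cnj_complex_of_real)
lemma cinner_cscale_right: "cinner (x::'a::complex_inner) (cscale c y) = cnj c * cinner x y"
  by (metis cinner_commute cinner_cscale_left complex_cnj_mult)
lemma Im_cinner_self[simp]: "Im (cinner (x::'a::complex_inner) x) = 0"
  by (metis cinner_commute cnj.simps(2) neg_equal_zero)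
lemma norm_sq_cinner: "(norm (x::'a::complex_inner))^2 = Re (cinner x x)"
  by (simp add: norm_eq_sqrt_cinner cinner_nonneg)
lemma norm_diff_scaleR_sq:
  "(norm ((x::'a::complex_inner) - r *\<^sub>R z))^2 = (norm x)^2 - 2 * r * Re (cinner z x) + r^2 * (norm z)^2"
proof -
  have "cinner (x - r *\<^sub>R z) (x - r *\<^sub>R z) =
     cinner x x - of_real r * cinner z x - of_real r * cinner x z + of_real r * of_real r * cinner z z"
    by (simp add: cinner_diff_left cinner_diff_right cinner_scaleR_left cinner_scaleR_right algebra_simps)
  moreover have "Re (cinner x z) = Re (cinner z x)"
    by (subst cinner_commute) simp
  ultimately show ?thesis
    by (simp only: norm_sq_cinner) (simp add: power2_eq_square)
qed

lemma adjoint_inverse: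
  fixes M N Ms :: "'a::chilbert \<Rightarrow>\<^sub>L 'a"
  assumes MN: "\<And>x. M (N x) = x" and NM: "\<And>x. N (M x) = x"
    and adj: "is_adjoint Ms M"
  shows "\<exists>Q. is_adjoint Q N \<and> (\<forall>y. Ms (Q y) = y) \<and> (\<forall>y. Q (Ms y) = y)"
proof -
  have Msbop: "Ms \<in> bop" and Msi: "\<And>x y. cinner (M x) y = cinner x (Ms y)"
    using adj by (auto simp: is_adjoint_def)
  have inj0: "y = 0" if "Ms y = 0" for y
  proof -
    have "cinner y y = cinner (M (N y)) y" by (simp add: MN)
    also have "\<dots> = 0" using Msi that by simp
    finally show ?thesis using cinner_eq_zero_iff by blast
  qed
  have injMs: "y1 = y2" if "Ms y1 = Ms y2" for y1 y2
    using inj0[of "y1 - y2"] that by (simp add: blinfun.diff_right)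
  define S where "S = Ms o\<^sub>L M"
  have ReS: "Re (cinner (S x) x) = (norm (M x))^2" for x
  proof -
    have "cinner (S x) x = cnj (cinner x (Ms (M x)))"
      unfolding S_def by (simp add: cinner_commute[of x])
    also have "\<dots> = cnj (cinner (M x) (M x))" by (simp add: Msi)
    finally show ?thesis by (simp add: norm_sq_cinner)
  qed
  define nN where "nN = norm N"
  define c where "c = 1 / (nN^2 + 1)"
  have hN: "nN^2 + 1 > 0" by (smt (verit) zero_le_power2)
  have cpos: "c > 0" unfolding c_def using hN by simp
  have lowS: "c * (norm x)^2 \<le> Re (cinner (S x) x)" for x
  proof -
    have "norm x = norm (N (M x))" by (simp add: NM)
    also have "\<dots> \<le> nN * norm (M x)" unfolding nN_def by (simp add: norm_blinfun)
    finally have "norm x \<le> nN * norm (M x)" .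
    then have "(norm x)^2 \<le> (nN * norm (M x))^2" by (simp add: power_mono)
    also have "\<dots> \<le> (nN^2 + 1) * (norm (M x))^2" by (simp add: power_mult_distrib distrib_right)
    finally have "(norm x)^2 \<le> (nN^2 + 1) * (norm (M x))^2" .
    then have "(norm x)^2 / (nN^2 + 1) \<le> (norm (M x))^2"
      using hN by (simp add: divide_le_eq mult.commute)
    then show ?thesis unfolding c_def ReS by simp
  qed
  define L where "L = norm S"
  define t where "t = c / (L^2 + c^2)"
  have hL: "L^2 + c^2 > 0" using cpos by (smt (verit) zero_le_power2 zero_less_power)
  have tpos: "t > 0" unfolding t_def using cpos hL by simp
  have tL: "t * (L^2 + c^2) = c" unfolding t_def using hL by simp
  define q where "q = 1 - t * c"
  have q0: "0 \<le> q"
  proof -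
    have e: "(t*c) * (L^2+c^2) = c^2" using tL by (metis mult.commute mult.left_commute power2_eq_square)
    hence "(t*c) * (L^2+c^2) \<le> 1 * (L^2+c^2)" by simp
    hence "t*c \<le> 1" using hL mult_right_le_imp_le by blast
    then show ?thesis unfolding q_def by simp
  qed
  have q1: "q < 1" unfolding q_def using tpos cpos by simp
  have contr: "norm (x - t *\<^sub>R S x) \<le> sqrt q * norm x" for x
  proof -
    have nS: "norm (S x) \<le> L * norm x" unfolding L_def by (simp add: norm_blinfun)
    have "(norm (S x))^2 \<le> (L * norm x)^2" using nS by (simp add: power_mono)
    have "(norm (x - t *\<^sub>R S x))^2 = (norm x)^2 - 2 * t * Re (cinner (S x) x) + t^2 * (norm (S x))^2"
      by (rule norm_diff_scaleR_sq)
    also have "\<dots> \<le> (norm x)^2 - 2 * t * (c * (norm x)^2) + t^2 * (L * norm x)^2"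
    proof -
      have "2 * t * (c * (norm x)^2) \<le> 2 * t * Re (cinner (S x) x)"
        using lowS[of x] tpos by (intro mult_left_mono) auto
      moreover have "t^2 * (norm (S x))^2 \<le> t^2 * (L * norm x)^2"
        using \<open>(norm (S x))^2 \<le> (L * norm x)^2\<close> by (intro mult_left_mono) auto
      ultimately show ?thesis by linarith
    qed
    also have "\<dots> = (norm x)^2 * (1 - 2 * t * c + t * (t * L^2))"
      by (simp only: power_mult_distrib) algebra
    also have "\<dots> \<le> (norm x)^2 * (1 - 2 * t * c + t * (t * (L^2 + c^2)))"
    proof -
      have "t * (t * L^2) \<le> t * (t * (L^2 + c^2))" using tpos by (intro mult_left_mono) auto
      then show ?thesis by (intro mult_left_mono) auto
    qed
    also have "\<dots> = (norm x)^2 * q" unfolding tL q_def by algebra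
    also have "(norm x)^2 * q = (sqrt q * norm x)^2"
      using real_sqrt_pow2[OF q0] by (simp only: power_mult_distrib mult.commute)
    finally have "(norm (x - t *\<^sub>R S x))^2 \<le> (sqrt q * norm x)^2" .
    moreover have "0 \<le> sqrt q * norm x" using q0 by simp
    ultimately show ?thesis by (rule power2_le_imp_le)
  qed
  have sq1: "sqrt q < 1" using q1 q0 by simp
  define K where "K = t / (1 - sqrt q)"
  have solve: "\<exists>x. S x = y \<and> norm x \<le> K * norm y" for y
  proof -
    define F where "F z = z - t *\<^sub>R S z + t *\<^sub>R y" for z
    have "\<forall>z1 z2. dist (F z1) (F z2) \<le> sqrt q * dist z1 z2"
    proof (intro allI)
      fix z1 z2
      have "F z1 - F z2 = (z1 - z2) - t *\<^sub>R S (z1 - z2)"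
        unfolding F_def by (simp add: blinfun.diff_right algebra_simps)
      then show "dist (F z1) (F z2) \<le> sqrt q * dist z1 z2"
        using contr[of "z1 - z2"] by (simp add: dist_norm)
    qed
    then obtain x where fx: "F x = x" using banach_fix_type[of "sqrt q" F] q0 sq1 by auto
    have "x - t *\<^sub>R S x + t *\<^sub>R y = x" using fx unfolding F_def .
    then have "t *\<^sub>R (y - S x) = 0" by (simp add: scaleR_diff_right algebra_simps)
    then have "y - S x = 0" using tpos by simp
    then have Sx: "S x = y" by simp
    have e2: "(x - t *\<^sub>R S x) + t *\<^sub>R y = x" using fx by (simp only: F_def)
    have "norm x = norm ((x - t *\<^sub>R S x) + t *\<^sub>R y)" by (simp only: e2)
    also have "\<dots> \<le> sqrt q * norm x + t * norm y"
      using contr[of x] tpos by (intro order_trans[OF norm_triangle_ineq]) auto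
    finally have "(1 - sqrt q) * norm x \<le> t * norm y" by (simp add: algebra_simps)
    then have "norm x \<le> K * norm y" unfolding K_def using sq1
      by (simp add: pos_le_divide_eq mult.commute)
    with Sx show ?thesis by blast
  qed
  define g where "g y = M (SOME x. S x = y \<and> norm x \<le> K * norm y)" for y
  have gprop: "Ms (g y) = y \<and> norm (g y) \<le> norm M * K * norm y" for y
  proof -
    have "S (SOME x. S x = y \<and> norm x \<le> K * norm y) = y \<and>
          norm (SOME x. S x = y \<and> norm x \<le> K * norm y) \<le> K * norm y"
      using someI_ex[OF solve[of y]] .
    then have h1: "Ms (g y) = y" and h2: "norm (SOME x. S x = y \<and> norm x \<le> K * norm y) \<le> K * norm y"
      unfolding g_def S_def by auto
    have "norm (g y) \<le> norm M * norm (SOME x. S x = y \<and> norm x \<le> K * norm y)"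
      unfolding g_def by (rule norm_blinfun)
    also have "\<dots> \<le> norm M * (K * norm y)" using h2 by (intro mult_left_mono) auto
    finally show ?thesis using h1 by (simp add: mult.assoc)
  qed
  have bl: "bounded_linear g"
  proof (rule bounded_linear_intro)
    fix x y show "g (x + y) = g x + g y"
      by (rule injMs) (simp add: gprop blinfun.add_right)
  next
    fix r x show "g (r *\<^sub>R x) = r *\<^sub>R g x"
      by (rule injMs) (simp add: gprop blinfun.scaleR_right)
  next
    fix x show "norm (g x) \<le> norm x * (norm M * K)"
      using gprop[of x] by (simp add: mult.commute mult.left_commute)
  qed
  define Q where "Q = Blinfun g"
  have Qg: "blinfun_apply Q = g" unfolding Q_def using bl by (simp add: bounded_linear_Blinfun_apply)
  have MsQ: "\<forall>y. Ms (Q y) = y" using gprop Qg by simp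
  have QMs: "\<forall>y. Q (Ms y) = y" using MsQ injMs by blast
  have Qbop: "Q \<in> bop" unfolding bop_def
  proof (intro CollectI allI)
    fix cc x show "Q (cscale cc x) = cscale cc (Q x)"
    proof (rule injMs)
      have "Ms (cscale cc (Q x)) = cscale cc (Ms (Q x))" using Msbop by (simp add: bop_def)
      then show "Ms (Q (cscale cc x)) = Ms (cscale cc (Q x))" using MsQ by simp
    qed
  qed
  have "cinner (N x) y = cinner x (Q y)" for x y
  proof -
    have "cinner (N x) y = cinner (N x) (Ms (Q y))" using MsQ by simp
    also have "\<dots> = cinner (M (N x)) (Q y)" by (simp add: Msi)
    finally show ?thesis by (simp add: MN)
  qed
  then have "is_adjoint Q N" using Qbop by (simp add: is_adjoint_def)
  then show ?thesis using MsQ QMs by blast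
qed

lemma bop_compose: "A \<in> bop \<Longrightarrow> B \<in> bop \<Longrightarrow> A o\<^sub>L B \<in> bop"
  by (simp add: bop_def)
lemma bop_add: "A \<in> bop \<Longrightarrow> B \<in> bop \<Longrightarrow> A + B \<in> bop"
  by (simp add: bop_def blinfun.add_left cscale_add_right)

lemma blinfun_uminus_apply[simp]: "blinfun_apply (- f) x = - blinfun_apply f x"
  by (simp add: uminus_blinfun.rep_eq)
lemma blinfun_plus_apply[simp]: "blinfun_apply (f + g) x = blinfun_apply f x + blinfun_apply g x"
  by (simp add: plus_blinfun.rep_eq)

lemma blinfun_eq_iff: "(A::'a::real_normed_vector \<Rightarrow>\<^sub>L 'b::real_normed_vector) = B \<longleftrightarrow> (\<forall>x. A x = B x)"
  by (auto intro: blinfun_eqI)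

lemma comp_id_iff: "A o\<^sub>L B = id_blinfun \<longleftrightarrow> (\<forall>x. A (B x) = x)"
  by (auto simp: blinfun_eq_iff)

lemma inv_op_eq:
  fixes M N :: "'a::chilbert \<Rightarrow>\<^sub>L 'a"
  assumes "\<And>x. M (N x) = x" "\<And>x. N (M x) = x"
  shows "inv_op M = N"
  unfolding inv_op_def
proof (rule the_equality)
  show "M o\<^sub>L N = id_blinfun \<and> N o\<^sub>L M = id_blinfun" using assms by (simp add: comp_id_iff)
next
  fix N' assume "M o\<^sub>L N' = id_blinfun \<and> N' o\<^sub>L M = id_blinfun"
  then have h: "\<And>x. M (N' x) = x" "\<And>x. N' (M x) = x" by (auto simp: comp_id_iff)
  show "N' = N"
  proof (rule blinfun_eqI)
    fix x have "N' x = N' (M (N x))" using assms by simp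
    then show "N' x = N x" using h by simp
  qed
qed

lemma GL_opE:
  fixes M :: "'a::chilbert \<Rightarrow>\<^sub>L 'a"
  assumes "M \<in> GL_op"
  obtains N where "N \<in> bop" "\<And>x. M (N x) = x" "\<And>x. N (M x) = x" "inv_op M = N" "M \<in> bop"
proof -
  from assms obtain N where N: "N \<in> bop" "M o\<^sub>L N = id_blinfun" "N o\<^sub>L M = id_blinfun" "M \<in> bop"
    by (auto simp: GL_op_def)
  then have h: "\<And>x. M (N x) = x" "\<And>x. N (M x) = x" by (auto simp: comp_id_iff)
  show ?thesis using that[OF N(1) h inv_op_eq[OF h] N(4)] .
qed

lemma SpE:
  fixes M J :: "'a::chilbert \<Rightarrow>\<^sub>L 'a"
  assumes "M \<in> Sp J"
  obtains N Ms where "N \<in> bop" "\<And>x. M (N x) = x" "\<And>x. N (M x) = x" "inv_op M = N" "M \<in> bop"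
    "is_adjoint Ms M" "\<And>x. Ms (J (M x)) = J x"
proof -
  from assms obtain Ms where Ms: "M \<in> GL_op" "is_adjoint Ms M" "Ms o\<^sub>L J o\<^sub>L M = J"
    by (auto simp: Sp_def)
  then have "\<And>x. Ms (J (M x)) = J x" by (metis blinfun_apply_blinfun_compose)
  with Ms GL_opE[OF Ms(1)] that show ?thesis by metis
qed

lemma Sp_mult:
  fixes M1 M2 J :: "'a::chilbert \<Rightarrow>\<^sub>L 'a"
  assumes "M1 \<in> Sp J" "M2 \<in> Sp J"
  shows "M1 o\<^sub>L M2 \<in> Sp J"
proof -
  obtain N1 Ms1 where 1: "N1 \<in> bop" "\<And>x. M1 (N1 x) = x" "\<And>x. N1 (M1 x) = x" "M1 \<in> bop"
    "is_adjoint Ms1 M1" "\<And>x. Ms1 (J (M1 x)) = J x" using SpE[OF assms(1)] by metis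
  obtain N2 Ms2 where 2: "N2 \<in> bop" "\<And>x. M2 (N2 x) = x" "\<And>x. N2 (M2 x) = x" "M2 \<in> bop"
    "is_adjoint Ms2 M2" "\<And>x. Ms2 (J (M2 x)) = J x" using SpE[OF assms(2)] by metis
  have GL: "M1 o\<^sub>L M2 \<in> GL_op" unfolding GL_op_def
    using 1 2 by (auto intro!: bexI[of _ "N2 o\<^sub>L N1"] bop_compose simp: comp_id_iff)
  have adj: "is_adjoint (Ms2 o\<^sub>L Ms1) (M1 o\<^sub>L M2)"
    using 1(5) 2(5) by (auto simp: is_adjoint_def bop_compose)
  have "(Ms2 o\<^sub>L Ms1) o\<^sub>L J o\<^sub>L (M1 o\<^sub>L M2) = J"
    by (rule blinfun_eqI) (simp add: 1(6) 2(6))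
  then show ?thesis using GL adj unfolding Sp_def by blast
qed

lemma Kcone_conj:
  fixes M1 A A1 A2 J :: "'a::chilbert \<Rightarrow>\<^sub>L 'a"
  assumes M1: "M1 \<in> Sp J" and K1: "A1 \<in> Kcone J" and K2: "A2 \<in> Kcone J"
    and Aeq: "\<And>x. A x = A1 x + M1 (A2 (inv_op M1 x))"
  shows "A \<in> Kcone J"
proof -
  obtain N1 Ms1 where 1: "N1 \<in> bop" "\<And>x. M1 (N1 x) = x" "\<And>x. N1 (M1 x) = x" "inv_op M1 = N1" "M1 \<in> bop"
    "is_adjoint Ms1 M1" "\<And>x. Ms1 (J (M1 x)) = J x" using SpE[OF M1] by metis
  obtain Q where Q: "is_adjoint Q N1" "\<And>y. Ms1 (Q y) = y" "\<And>y. Q (Ms1 y) = y"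
    using adjoint_inverse[OF 1(2,3,6)] by blast
  have Aeq': "\<And>x. A x = A1 x + M1 (A2 (N1 x))" using Aeq 1(4) by simp
  have MsJ: "Ms1 (J y) = J (N1 y)" for y using 1(7)[of "N1 y"] 1(2) by simp
  have QJ: "Q (J z) = J (M1 z)" for z using MsJ[of "M1 z"] 1(3) Q(3) by metis
  obtain As1 where A1: "A1 \<in> bop" "is_adjoint As1 A1" "\<And>x. - J (A1 x) = As1 (J x)"
     "pos_def (- (J o\<^sub>L A1))"
    using K1 unfolding Kcone_def by (auto simp: blinfun_eq_iff)
  obtain As2 where A2: "A2 \<in> bop" "is_adjoint As2 A2" "\<And>x. - J (A2 x) = As2 (J x)"
     "pos_def (- (J o\<^sub>L A2))"
    using K2 unfolding Kcone_def by (auto simp: blinfun_eq_iff)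
  have Ms1bop: "Ms1 \<in> bop" and Ms1i: "\<And>x y. cinner (M1 x) y = cinner x (Ms1 y)"
    using 1(6) by (auto simp: is_adjoint_def)
  have Qbop: "Q \<in> bop" and Qi: "\<And>x y. cinner (N1 x) y = cinner x (Q y)"
    using Q(1) by (auto simp: is_adjoint_def)
  have As1i: "\<And>x y. cinner (A1 x) y = cinner x (As1 y)" and As1bop: "As1 \<in> bop"
    using A1(2) by (auto simp: is_adjoint_def)
  have As2i: "\<And>x y. cinner (A2 x) y = cinner x (As2 y)" and As2bop: "As2 \<in> bop"
    using A2(2) by (auto simp: is_adjoint_def)
  have Abop: "A \<in> bop"
    using A1(1) A2(1) 1(1) 1(5) unfolding bop_def by (simp add: Aeq' cscale_add_right)
  define As where "As = As1 + (Q o\<^sub>L As2 o\<^sub>L Ms1)"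
  have Asbop: "As \<in> bop" unfolding As_def
    by (intro bop_add bop_compose As1bop Qbop As2bop Ms1bop)
  have adjA: "is_adjoint As A" unfolding is_adjoint_def
  proof (intro conjI allI Asbop)
    fix x y
    show "cinner (A x) y = cinner x (As y)"
      by (simp add: Aeq' As_def cinner_add_left cinner_add_right blinfun.add_left
          As1i Ms1i As2i Qi)
  qed
  have eqA: "- J (A x) = As (J x)" for x
  proof -
    have "As (J x) = As1 (J x) + Q (As2 (J (N1 x)))" by (simp add: As_def blinfun.add_left MsJ)
    also have "\<dots> = - J (A1 x) + Q (- J (A2 (N1 x)))" by (simp add: A1(3) A2(3))
    also have "\<dots> = - J (A1 x) - J (M1 (A2 (N1 x)))" by (simp add: blinfun.minus_right QJ)
    also have "\<dots> = - J (A x)" by (simp add: Aeq' blinfun.add_right)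
    finally show ?thesis by simp
  qed
  have pos: "pos_def (- (J o\<^sub>L A))" unfolding pos_def_def
  proof (intro allI impI)
    fix x :: 'a assume x0: "x \<noteq> 0"
    have N0: "N1 x \<noteq> 0" using x0 1(2)[of x] by (auto simp: blinfun.zero_right)
    define w where "w = - J (A2 (N1 x))"
    have "(- (J o\<^sub>L A)) x = - J (A1 x) + Q w"
      unfolding w_def by (simp add: Aeq' blinfun.add_right blinfun.minus_right QJ)
    then have "cinner ((- (J o\<^sub>L A)) x) x = cinner ((- (J o\<^sub>L A1)) x) x + cinner w (N1 x)"
    proof -
      have cQ: "cinner (Q w) x = cinner w (N1 x)"
        by (metis Qi cinner_commute)
      assume h: "(- (J o\<^sub>L A)) x = - J (A1 x) + Q w"
      show ?thesis by (simp only: h cinner_add_left cQ) simp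
    qed
    moreover have "w = (- (J o\<^sub>L A2)) (N1 x)" unfolding w_def by simp
    ultimately show "Im (cinner ((- (J o\<^sub>L A)) x) x) = 0 \<and> 0 < Re (cinner ((- (J o\<^sub>L A)) x) x)"
      using A1(4) A2(4) x0 N0 unfolding pos_def_def
      by (metis (no_types, lifting) add_pos_pos plus_complex.sel add.right_neutral)
  qed
  have "- (J o\<^sub>L A) = As o\<^sub>L J" by (rule blinfun_eqI) (simp add: eqA)
  then show ?thesis unfolding Kcone_def using Abop adjA pos by blast
qed

theorem lemma2p2:
  fixes J :: "'a::chilbert \<Rightarrow>\<^sub>L 'a"
    and \<gamma>1 \<gamma>2 :: "real \<Rightarrow> ('a \<Rightarrow>\<^sub>L 'a)"
    and a b :: real
  assumes "sympl_op J"
    and "a < b"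
    and "positive_path J a b \<gamma>1"
    and "positive_path J a b \<gamma>2"
  shows "positive_path J a b (\<lambda>t. \<gamma>1 t o\<^sub>L \<gamma>2 t)"
proof -
  define D1 where "D1 t = vector_derivative \<gamma>1 (at t within {a..b})" for t
  define D2 where "D2 t = vector_derivative \<gamma>2 (at t within {a..b})" for t
  have Sp1: "\<And>t. t \<in> {a..b} \<Longrightarrow> \<gamma>1 t \<in> Sp J" and C1: "C1_on {a..b} \<gamma>1"
    and K1: "\<And>t. t \<in> {a..b} \<Longrightarrow> D1 t o\<^sub>L inv_op (\<gamma>1 t) \<in> Kcone J"
    using assms(3) unfolding positive_path_def D1_def by auto
  have Sp2: "\<And>t. t \<in> {a..b} \<Longrightarrow> \<gamma>2 t \<in> Sp J" and C2: "C1_on {a..b} \<gamma>2"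
    and K2: "\<And>t. t \<in> {a..b} \<Longrightarrow> D2 t o\<^sub>L inv_op (\<gamma>2 t) \<in> Kcone J"
    using assms(4) unfolding positive_path_def D2_def by auto
  have d1: "(\<gamma>1 has_vector_derivative D1 t) (at t within {a..b})" if "t \<in> {a..b}" for t
    using C1 that unfolding C1_on_def D1_def by (simp add: vector_derivative_works)
  have d2: "(\<gamma>2 has_vector_derivative D2 t) (at t within {a..b})" if "t \<in> {a..b}" for t
    using C2 that unfolding C1_on_def D2_def by (simp add: vector_derivative_works)
  have cD1: "continuous_on {a..b} D1" and cD2: "continuous_on {a..b} D2"
    using C1 C2 unfolding C1_on_def D1_def D2_def by auto
  have c1: "continuous_on {a..b} \<gamma>1" and c2: "continuous_on {a..b} \<gamma>2"
    using C1 C2 unfolding C1_on_def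
    by (auto simp: continuous_on_eq_continuous_within intro: differentiable_imp_continuous_within)
  define D where "D t = (\<gamma>1 t o\<^sub>L D2 t) + (D1 t o\<^sub>L \<gamma>2 t)" for t
  have d: "((\<lambda>t. \<gamma>1 t o\<^sub>L \<gamma>2 t) has_vector_derivative D t) (at t within {a..b})"
    if "t \<in> {a..b}" for t
    unfolding D_def
    using bounded_bilinear.has_vector_derivative[OF bounded_bilinear_blinfun_compose d1[OF that] d2[OF that]]
    by simp
  have vd: "vector_derivative (\<lambda>t. \<gamma>1 t o\<^sub>L \<gamma>2 t) (at t within {a..b}) = D t"
    if "t \<in> {a..b}" for t
    using vector_derivative_within_cbox[of a b t "\<lambda>t. \<gamma>1 t o\<^sub>L \<gamma>2 t" "D t"] d[OF that] that assms(2)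
    by simp
  have cD: "continuous_on {a..b} D" unfolding D_def
    by (intro continuous_on_add bounded_bilinear.continuous_on[OF bounded_bilinear_blinfun_compose]
        c1 c2 cD1 cD2)
  have C: "C1_on {a..b} (\<lambda>t. \<gamma>1 t o\<^sub>L \<gamma>2 t)"
    unfolding C1_on_def
  proof
    show "\<forall>t\<in>{a..b}. (\<lambda>t. \<gamma>1 t o\<^sub>L \<gamma>2 t) differentiable at t within {a..b}"
      using d differentiableI_vector by blast
    show "continuous_on {a..b} (\<lambda>t. vector_derivative (\<lambda>t. \<gamma>1 t o\<^sub>L \<gamma>2 t) (at t within {a..b}))"
      using cD by (rule continuous_on_eq) (simp add: vd)
  qed
  have K: "vector_derivative (\<lambda>t. \<gamma>1 t o\<^sub>L \<gamma>2 t) (at t within {a..b}) o\<^sub>L inv_op (\<gamma>1 t o\<^sub>L \<gamma>2 t) \<in> Kcone J"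
    if t: "t \<in> {a..b}" for t
  proof -
    obtain N1 :: "'a \<Rightarrow>\<^sub>L 'a" where N1: "\<And>x. \<gamma>1 t (N1 x) = x" "\<And>x. N1 (\<gamma>1 t x) = x" "inv_op (\<gamma>1 t) = N1"
      using SpE[OF Sp1[OF t]] by metis
    obtain N2 :: "'a \<Rightarrow>\<^sub>L 'a" where N2: "\<And>x. \<gamma>2 t (N2 x) = x" "\<And>x. N2 (\<gamma>2 t x) = x" "inv_op (\<gamma>2 t) = N2"
      using SpE[OF Sp2[OF t]] by metis
    have inv: "inv_op (\<gamma>1 t o\<^sub>L \<gamma>2 t) = N2 o\<^sub>L N1"
      by (rule inv_op_eq) (simp_all add: N1 N2)
    show ?thesis unfolding vd[OF t] inv
    proof (rule Kcone_conj[OF Sp1[OF t] K1[OF t] K2[OF t]])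
      fix x
      show "(D t o\<^sub>L (N2 o\<^sub>L N1)) x =
        (D1 t o\<^sub>L inv_op (\<gamma>1 t)) x + \<gamma>1 t ((D2 t o\<^sub>L inv_op (\<gamma>2 t)) (inv_op (\<gamma>1 t) x))"
        by (simp add: D_def N1 N2 add.commute)
    qed
  qed
  show ?thesis unfolding positive_path_def
    using Sp_mult[OF Sp1 Sp2] C K by blast
qed

end
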